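(* Suppose $G(z)=\sum_{n\ge0}a_n^2z^n$ is type II admissible. Then there exist $\varepsilon\in(0,1)$, $C>0$ and $t_0$ such that for all $t\ge t_0$ and all integers $n\ge0$, \[ \left|a_n^2e^{nt}\frac{\sqrt{2\pi B(t)}}{H(t)}-\exp\left(-\frac{(n-A(t))^2}{2B(t)}\right)\right|\le\frac{C}{B^{\varepsilon}(t)}. \]
   Context: $G$ is entire with $a_n\ge0$, infinitely many non-zero; $H(t)=G(e^t)$, $A=H'/H$, $B=A'$. $G$ is type II admissible if: (1) $B$ is non-decreasing and unbounded; (2) $A(t)=O(B^2(t))$ as $t\to\infty$; (3) there exist constants $C_G>2$ and $\varepsilon>0$ such that, with $\delta(t)=\sqrt{C_G\log B(t)/B(t)}$, for all sufficiently large $t$ and all $|\theta|\le\delta(t)$, $\log\frac{H(t+i\theta)}{H(t)}=i\theta A(t)-\frac12\theta^2B(t)+\Delta(t,\theta)$ with $|\Delta(t,\theta)|\le B^{3/2-\varepsilon}(t)|\theta|^3$; (4) $|H(t+i\theta)|=O(H(t)/B(t))$ as $t\to\infty$, uniformly in $\delta(t)\le|\theta|\le\pi$. *)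

theory Defs
  imports "HOL-Analysis.Analysis" "HOL-Library.Landau_Symbols"
begin

text \<open>G(z) = sum of b n * z^n with b n >= 0. Complex extension of H(t) = G(e^t):
  Hc w = G(exp w) = sum of b n * exp(n w).\<close>

definition Hc :: "(nat \<Rightarrow> real) \<Rightarrow> complex \<Rightarrow> complex" where
  "Hc b w = (\<Sum>n. complex_of_real (b n) * exp (of_nat n * w))"

definition Hr :: "(nat \<Rightarrow> real) \<Rightarrow> real \<Rightarrow> real" where
  "Hr b t = (\<Sum>n. b n * exp (real n * t))"

definition Af :: "(nat \<Rightarrow> real) \<Rightarrow> real \<Rightarrow> real" where
  "Af b t = deriv (Hr b) t / Hr b t"

definition Bf :: "(nat \<Rightarrow> real) \<Rightarrow> real \<Rightarrow> real" where
  "Bf b t = deriv (Af b) t"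

definition deltaf :: "(nat \<Rightarrow> real) \<Rightarrow> real \<Rightarrow> real \<Rightarrow> real" where
  "deltaf b CG t = sqrt (CG * ln (Bf b t) / Bf b t)"

definition type_II_admissible :: "(nat \<Rightarrow> real) \<Rightarrow> bool" where
  "type_II_admissible b \<longleftrightarrow>
     (\<forall>n. b n \<ge> 0) \<and>
     (\<forall>z::complex. summable (\<lambda>n. b n * norm z ^ n)) \<and>
     infinite {n. b n \<noteq> 0} \<and>
     mono (Bf b) \<and> \<not> bdd_above (range (Bf b)) \<and>
     Af b \<in> O[at_top](\<lambda>t. (Bf b t)\<^sup>2) \<and>
     (\<exists>CG>2. \<exists>eps>0.
       (\<forall>\<^sub>F t in at_top. \<forall>\<theta>::real. \<bar>\<theta>\<bar> \<le> deltaf b CG t \<longrightarrow>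
          (\<exists>D::complex. Hc b (Complex t \<theta>) =
              complex_of_real (Hr b t) *
                exp (\<i> * complex_of_real (\<theta> * Af b t) - complex_of_real (\<theta>\<^sup>2 * Bf b t / 2) + D)
            \<and> norm D \<le> Bf b t powr (3/2 - eps) * \<bar>\<theta>\<bar> ^ 3)) \<and>
       (\<exists>K. \<forall>\<^sub>F t in at_top. \<forall>\<theta>::real. deltaf b CG t \<le> \<bar>\<theta>\<bar> \<and> \<bar>\<theta>\<bar> \<le> pi \<longrightarrow>
          norm (Hc b (Complex t \<theta>)) \<le> K * Hr b t / Bf b t))"

end

theory Submission imports Defs "HOL-Probability.Characteristic_Functions" "HOL-Complex_Analysis.Complex_Analysis" "HOL-Real_Asymp.Real_Asymp" begin

lemma gauss_moment:
  fixes s :: real and k :: nat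
  assumes s: "s > 0"
  defines "M \<equiv> integral\<^sup>L lborel (\<lambda>x. std_normal_density x * \<bar>x\<bar>^k)"
  shows "integrable lborel (\<lambda>\<theta>. exp (-(s*\<theta>)\<^sup>2/2) * \<bar>\<theta>\<bar>^k)"
    and "integral\<^sup>L lborel (\<lambda>\<theta>. exp (-(s*\<theta>)\<^sup>2/2) * \<bar>\<theta>\<bar>^k) = sqrt (2*pi) * M / s^(k+1)"
proof -
  let ?f = "\<lambda>x. std_normal_density x * \<bar>x\<bar>^k"
  have fi: "integrable lborel ?f" by (rule integrable_std_normal_moment_abs)
  have eq: "?f (0 + s*\<theta>) = (s^k / sqrt (2*pi)) * (exp (-(s*\<theta>)\<^sup>2/2) * \<bar>\<theta>\<bar>^k)" for \<theta>
    using s by (simp add: std_normal_density_def abs_mult power_mult_distrib)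
  have "integrable lborel (\<lambda>\<theta>. ?f (0 + s*\<theta>))"
    using lborel_integrable_real_affine[OF fi, of s 0] s by simp
  hence "integrable lborel (\<lambda>\<theta>. (sqrt (2*pi) / s^k) * ?f (0 + s*\<theta>))" by simp
  moreover have "(\<lambda>\<theta>. (sqrt (2*pi) / s^k) * ?f (0 + s*\<theta>)) = (\<lambda>\<theta>. exp (-(s*\<theta>)\<^sup>2/2) * \<bar>\<theta>\<bar>^k)"
    by (simp only: eq) (use s in simp)
  ultimately show "integrable lborel (\<lambda>\<theta>. exp (-(s*\<theta>)\<^sup>2/2) * \<bar>\<theta>\<bar>^k)" by simp
  have "M = s * integral\<^sup>L lborel (\<lambda>\<theta>. ?f (0 + s*\<theta>))"
    unfolding M_def using lborel_integral_real_affine[of s ?f 0] s by simp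
  also have "\<dots> = s * (s^k / sqrt (2*pi)) * integral\<^sup>L lborel (\<lambda>\<theta>. exp (-(s*\<theta>)\<^sup>2/2) * \<bar>\<theta>\<bar>^k)"
    by (simp only: eq integral_mult_right_zero mult.assoc)
  finally show "integral\<^sup>L lborel (\<lambda>\<theta>. exp (-(s*\<theta>)\<^sup>2/2) * \<bar>\<theta>\<bar>^k) = sqrt (2*pi) * M / s^(k+1)"
    using s by (simp add: field_simps)
qed

lemma gauss_char:
  fixes s y :: real
  assumes s: "s > 0"
  shows "integrable lborel (\<lambda>\<theta>. exp (-(s*\<theta>)\<^sup>2/2) *\<^sub>R iexp (y*\<theta>))"
    and "integral\<^sup>L lborel (\<lambda>\<theta>. exp (-(s*\<theta>)\<^sup>2/2) *\<^sub>R iexp (y*\<theta>)) = of_real (sqrt (2*pi) / s * exp (-(y/s)\<^sup>2/2))"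
proof -
  let ?h = "\<lambda>u. std_normal_density u *\<^sub>R iexp (y/s * u)"
  have m: "(\<lambda>u. iexp (y/s * u)) \<in> borel_measurable lborel" by measurable
  have hi: "integrable lborel ?h"
  proof (rule Bochner_Integration.integrable_bound[where f = "std_normal_density"])
    show "integrable lborel std_normal_density" using integrable_std_normal_moment_abs[of 0] by simp
    show "?h \<in> borel_measurable lborel" by measurable
    show "AE x in lborel. norm (?h x) \<le> norm (std_normal_density x)"
      by (auto simp: norm_mult)
  qed
  have "char std_normal_distribution (y/s) = integral\<^sup>L lborel ?h"
    unfolding char_def
    by (rule integral_density[OF m]) (auto simp: normal_density_nonneg)
  hence c: "integral\<^sup>L lborel ?h = of_real (exp (-(y/s)\<^sup>2/2))"
    by (simp add: char_std_normal_distribution)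
  have eq: "?h (0 + s*\<theta>) = (1/sqrt (2*pi)) *\<^sub>R (exp (-(s*\<theta>)\<^sup>2/2) *\<^sub>R iexp (y*\<theta>))" for \<theta>
    using s by (simp add: std_normal_density_def)
  have "integrable lborel (\<lambda>\<theta>. ?h (0 + s*\<theta>))"
    using lborel_integrable_real_affine[OF hi, of s 0] s by simp
  hence "integrable lborel (\<lambda>\<theta>. sqrt (2*pi) *\<^sub>R ?h (0 + s*\<theta>))"
    by (rule integrable_scaleR_right)
  moreover have "(\<lambda>\<theta>. sqrt (2*pi) *\<^sub>R ?h (0 + s*\<theta>)) = (\<lambda>\<theta>. exp (-(s*\<theta>)\<^sup>2/2) *\<^sub>R iexp (y*\<theta>))"
    by (simp only: eq) (use s in simp)
  ultimately show "integrable lborel (\<lambda>\<theta>. exp (-(s*\<theta>)\<^sup>2/2) *\<^sub>R iexp (y*\<theta>))" by simp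
  have "integral\<^sup>L lborel ?h = s *\<^sub>R integral\<^sup>L lborel (\<lambda>\<theta>. ?h (0 + s*\<theta>))"
    using lborel_integral_real_affine[of s ?h 0] s by simp
  also have "\<dots> = (s / sqrt (2*pi)) *\<^sub>R integral\<^sup>L lborel (\<lambda>\<theta>. exp (-(s*\<theta>)\<^sup>2/2) *\<^sub>R iexp (y*\<theta>))"
    by (simp only: eq integral_scaleR_right integral_mult_right_zero) (simp add: scaleR_conv_of_real)
  finally show "integral\<^sup>L lborel (\<lambda>\<theta>. exp (-(s*\<theta>)\<^sup>2/2) *\<^sub>R iexp (y*\<theta>)) = of_real (sqrt (2*pi) / s * exp (-(y/s)\<^sup>2/2))"
    using s c by (simp add: field_simps scaleR_conv_of_real)
qed

lemma exp_int_integral: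
  fixes m :: int
  shows "integral\<^sup>L lborel (\<lambda>\<theta>::real. indicator {-pi..pi} \<theta> *\<^sub>R exp (\<i> * of_int m * of_real \<theta>))
           = (if m = 0 then complex_of_real (2*pi) else 0)"
proof -
  let ?g = "\<lambda>\<theta>::real. exp (\<i> * of_int m * of_real \<theta>)"
  have cont: "continuous_on {-pi..pi} ?g" by (intro continuous_intros)
  have si: "set_integrable lborel {-pi..pi} ?g"
    unfolding set_integrable_def by (rule borel_integrable_compact[OF compact_Icc cont])
  have eq: "integral\<^sup>L lborel (\<lambda>\<theta>::real. indicator {-pi..pi} \<theta> *\<^sub>R ?g \<theta>) = integral {-pi..pi} ?g"
    using set_borel_integral_eq_integral(2)[OF si] unfolding set_lebesgue_integral_def .
  show ?thesis
  proof (cases "m = 0")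
    case True
    then show ?thesis unfolding eq by (simp add: scaleR_conv_of_real)
  next
    case False
    let ?F = "\<lambda>\<theta>::real. exp (\<i> * of_int m * of_real \<theta>) / (\<i> * of_int m)"
    have d: "(?F has_vector_derivative ?g x) (at x within {-pi..pi})" for x
    proof -
      have "((\<lambda>z. exp (\<i> * of_int m * z) / (\<i> * of_int m)) has_field_derivative
              exp (\<i> * of_int m * of_real x)) (at (of_real x))"
        using False by (auto intro!: derivative_eq_intros)
      from has_vector_derivative_real_field[OF this] show ?thesis .
    qed
    have "(?g has_integral (?F pi - ?F (-pi))) {-pi..pi}"
      by (rule fundamental_theorem_of_calculus) (use d in auto)
    moreover have "?F pi = ?F (-pi)"
    proof -
      have "exp (\<i> * of_int m * of_real pi) = exp (\<i> * of_int m * of_real (-pi)) * exp ((2 * of_int m * pi) * \<i>)"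
      proof -
        have "\<i> * of_int m * of_real pi = \<i> * of_int m * of_real (-pi) + (2 * of_int m * pi) * \<i>"
          by (simp add: algebra_simps)
        thus ?thesis by (simp only: exp_add[symmetric])
      qed
      also have "exp ((2 * of_int m * pi) * \<i>) = 1" by (rule exp_integer_2pi) simp
      finally have e: "exp (\<i> * of_int m * of_real pi) = exp (\<i> * of_int m * of_real (-pi))" by simp
      show ?thesis by (simp only: e)
    qed
    ultimately show ?thesis unfolding eq using False by (simp add: integral_unique)
  qed
qed

lemma fourier_coeff:
  fixes b :: "nat \<Rightarrow> real" and t :: real and n :: nat
  assumes b: "\<And>k. b k \<ge> 0" and sm: "summable (\<lambda>k. b k * exp (real k * t))"
  defines "P \<equiv> \<lambda>\<theta>::real. indicator {-pi..pi} \<theta> *\<^sub>R (Hc b (Complex t \<theta>) * exp (- (\<i> * of_nat n * of_real \<theta>)))"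
  shows "integrable lborel P" and "integral\<^sup>L lborel P = complex_of_real (2*pi * (b n * exp (real n * t)))"
proof -
  define c where "c k = b k * exp (real k * t)" for k
  have c0: "c k \<ge> 0" for k using b[of k] by (simp add: c_def)
  have csm: "summable c" unfolding c_def using sm .
  define f where "f k \<theta> = indicator {-pi..pi} \<theta> *\<^sub>R (complex_of_real (c k) * exp (\<i> * of_int (int k - int n) * of_real \<theta>))" for k and \<theta>::real
  have fi: "integrable lborel (f k)" for k
    unfolding f_def by (rule borel_integrable_compact) (auto intro!: continuous_intros)
  have nf: "norm (f k \<theta>) = c k * indicator {-pi..pi} \<theta>" for k \<theta>
    using c0[of k] by (simp add: f_def norm_mult indicator_def)
  have s1: "AE \<theta> in lborel. summable (\<lambda>k. norm (f k \<theta>))"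
    unfolding nf by (auto intro!: summable_mult2 csm)
  have inf: "integral\<^sup>L lborel (\<lambda>\<theta>. norm (f k \<theta>)) = c k * (2*pi)" for k
    unfolding nf by simp
  have s2: "summable (\<lambda>k. integral\<^sup>L lborel (\<lambda>\<theta>. norm (f k \<theta>)))"
    unfolding inf by (intro summable_mult2 csm)
  have trm: "complex_of_real (b k) * exp (of_nat k * Complex t \<theta>) * exp (- (\<i> * of_nat n * of_real \<theta>))
     = complex_of_real (c k) * exp (\<i> * of_int (int k - int n) * of_real \<theta>)" for k \<theta>
  proof -
    have "Complex t \<theta> = of_real t + \<i> * of_real \<theta>" by (simp add: complex_eq_iff)
    hence "exp (of_nat k * Complex t \<theta>) * exp (- (\<i> * of_nat n * of_real \<theta>))
        = exp (of_real (real k * t)) * exp (\<i> * of_int (int k - int n) * of_real \<theta>)"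
      by (simp add: exp_add[symmetric] algebra_simps)
    moreover have "exp (of_real (real k * t)) = complex_of_real (exp (real k * t))" by (rule exp_of_real)
    ultimately show ?thesis by (simp add: c_def)
  qed
  have hsum: "Hc b (Complex t \<theta>) * exp (- (\<i> * of_nat n * of_real \<theta>))
      = (\<Sum>k. complex_of_real (c k) * exp (\<i> * of_int (int k - int n) * of_real \<theta>))" for \<theta>
  proof -
    have sc: "summable (\<lambda>k. complex_of_real (b k) * exp (of_nat k * Complex t \<theta>))"
    proof (rule summable_norm_cancel, rule summable_comparison_test[OF _ csm])
      show "\<exists>N. \<forall>k\<ge>N. norm (norm (complex_of_real (b k) * exp (of_nat k * Complex t \<theta>))) \<le> c k"
        using b by (auto simp: norm_mult c_def)
    qed
    show ?thesis unfolding Hc_def suminf_mult2[OF sc] trm ..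
  qed
  have Pf: "P = (\<lambda>\<theta>. \<Sum>k. f k \<theta>)"
  proof
    fix \<theta> :: real
    show "P \<theta> = (\<Sum>k. f k \<theta>)"
      by (cases "\<theta> \<in> {-pi..pi}") (simp_all add: P_def f_def hsum)
  qed
  show "integrable lborel P" unfolding Pf by (rule integrable_suminf[OF fi s1 s2])
  have ik: "integral\<^sup>L lborel (f k) = (if k = n then complex_of_real (2*pi * c n) else 0)" for k
  proof -
    have "integral\<^sup>L lborel (f k) = complex_of_real (c k) * integral\<^sup>L lborel
         (\<lambda>\<theta>::real. indicator {-pi..pi} \<theta> *\<^sub>R exp (\<i> * of_int (int k - int n) * of_real \<theta>))"
      unfolding f_def by (simp add: integral_mult_right_zero[symmetric] mult_scaleR_right)
    also have "\<dots> = (if k = n then complex_of_real (2*pi * c n) else 0)"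
      unfolding exp_int_integral by (auto simp: mult.commute)
    finally show ?thesis .
  qed
  have "integral\<^sup>L lborel P = (\<Sum>k. integral\<^sup>L lborel (f k))"
    unfolding Pf by (rule integral_suminf[OF fi s1 s2])
  also have "\<dots> = complex_of_real (2*pi * c n)"
    unfolding ik using sums_single[of n "\<lambda>_. complex_of_real (2*pi * c n)"] by (simp add: sums_iff)
  finally show "integral\<^sup>L lborel P = complex_of_real (2*pi * (b n * exp (real n * t)))"
    by (simp add: c_def)
qed

lemma exp_helper1: "(H::real) \<noteq> 0 \<Longrightarrow> (complex_of_real H * exp a) * exp b / complex_of_real H = exp (a + b)"
  by (simp add: exp_add)

lemma exp_helper2: "exp ((z::complex) + d) - exp z = exp z * (exp d - 1)"
  by (simp add: exp_add algebra_simps mult.commute)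

lemma key_identity:
  fixes H A B \<theta> :: real and D :: complex and n :: nat
  assumes H: "H \<noteq> 0" and B: "B \<ge> 0"
  shows "(complex_of_real H * exp (\<i> * complex_of_real (\<theta> * A) - complex_of_real (\<theta>\<^sup>2 * B / 2) + D))
           * exp (- (\<i> * of_nat n * of_real \<theta>)) / complex_of_real H
         - exp (-(sqrt B * \<theta>)\<^sup>2/2) *\<^sub>R iexp ((-(real n - A)) * \<theta>)
       = (exp (-(sqrt B * \<theta>)\<^sup>2/2) *\<^sub>R iexp ((-(real n - A)) * \<theta>)) * (exp D - 1)"
proof -
  define Z where "Z = complex_of_real (-(\<theta>\<^sup>2 * B/2)) + \<i> * complex_of_real ((-(real n - A)) * \<theta>)"
  have g: "exp (-(sqrt B * \<theta>)\<^sup>2/2) *\<^sub>R iexp ((-(real n - A)) * \<theta>) = exp Z"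
  proof -
    have "exp (-(sqrt B * \<theta>)\<^sup>2/2) *\<^sub>R iexp ((-(real n - A)) * \<theta>)
      = exp (complex_of_real (-(\<theta>\<^sup>2 * B/2))) * exp (\<i> * complex_of_real ((-(real n - A)) * \<theta>))"
      using B by (simp add: scaleR_conv_of_real power_mult_distrib mult.commute flip: exp_of_real)
    thus ?thesis unfolding Z_def by (simp only: exp_add)
  qed
  have e: "\<i> * complex_of_real (\<theta> * A) - complex_of_real (\<theta>\<^sup>2 * B / 2) + D + (- (\<i> * of_nat n * of_real \<theta>))
      = Z + D"
    unfolding Z_def by (simp add: algebra_simps)
  show ?thesis unfolding exp_helper1[OF H] e g by (rule exp_helper2)
qed

lemma gauss_norm: "norm (exp (-(s * \<theta>)\<^sup>2/2) *\<^sub>R iexp (y * \<theta>)) = exp (-(s * \<theta>)\<^sup>2/2)"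
  by simp

lemma e1_aux:
  fixes B s k M3 eps :: real
  assumes B0: "B > 0" and sdef: "s = sqrt B" and kdef: "k = s / sqrt (2*pi)"
  shows "k * ((3/2 * B powr (3/2-eps)) * (sqrt (2*pi) * M3 / s^4)) = 3/2 * M3 * B powr (-eps)"
proof -
  have s0: "s > 0" using B0 sdef by simp
  have sB: "s = B powr (1/2)" using B0 sdef by (simp add: powr_half_sqrt)
  have "s^3 = B * s" using B0 sdef by (simp add: power3_eq_cube)
  also have "\<dots> = B powr (3/2)"
  proof -
    have "B powr (3/2) = B powr (1 + 1/2)" by simp
    also have "\<dots> = B powr 1 * B powr (1/2)" by (rule powr_add)
    finally show ?thesis unfolding sB using B0 by simp
  qed
  finally have s3: "s^3 = B powr (3/2)" .
  have q: "B powr (3/2-eps) / s^3 = B powr (-eps)" unfolding s3 using B0 by (simp add: powr_diff[symmetric])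
  have ks: "k * sqrt (2*pi) = s" unfolding kdef by simp
  have "k * ((3/2 * B powr (3/2-eps)) * (sqrt (2*pi) * M3 / s^4)) = 3/2 * M3 * (k * sqrt (2*pi)) * B powr (3/2-eps) / s^4"
    by (simp add: field_simps)
  also have "\<dots> = 3/2 * M3 * (B powr (3/2-eps) / s^3)" unfolding ks using s0 by (simp add: field_simps power_Suc power3_eq_cube power4_eq_xxxx)
  finally show ?thesis unfolding q .
qed

lemma e2_aux:
  fixes B s k K :: real
  assumes B0: "B > 0" and sdef: "s = sqrt B" and kdef: "k = s / sqrt (2*pi)"
  shows "k * ((\<bar>K\<bar>/B) * (2*pi)) = \<bar>K\<bar> * sqrt (2*pi) * B powr (-1/2)"
proof -
  have sB: "s = B powr (1/2)" using B0 sdef by (simp add: powr_half_sqrt)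
  have q: "s / B = B powr (-1/2)"
  proof -
    have "B powr (-1/2) = B powr (1/2 - 1)" by simp
    also have "\<dots> = B powr (1/2) / B powr 1" by (rule powr_diff)
    finally show ?thesis unfolding sB using B0 by simp
  qed
  have p: "2*pi / sqrt (2*pi) = sqrt (2*pi)" by (simp add: real_div_sqrt)
  have "k * ((\<bar>K\<bar>/B) * (2*pi)) = \<bar>K\<bar> * (2*pi / sqrt (2*pi)) * (s / B)" unfolding kdef by (simp add: field_simps)
  thus ?thesis unfolding p q by simp
qed

lemma e3_aux:
  fixes B s s' k CG \<delta> :: real
  assumes B0: "B > 0" and sdef: "s = sqrt B" and s'def: "s' = sqrt (B/2)" and kdef: "k = s / sqrt (2*pi)"
    and dsq: "\<delta>^2 = CG * ln B / B" and CG: "CG > 2" and lnB: "ln B \<ge> 1"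
  shows "k * (exp (-(\<delta>^2*B/4)) * (sqrt (2*pi) / s')) \<le> sqrt 2 * B powr (-1/2)"
proof -
  have ss: "s / s' = sqrt 2" using B0 unfolding sdef s'def by (simp add: real_sqrt_divide)
  have "k * (exp (-(\<delta>^2*B/4)) * (sqrt (2*pi) / s')) = (s / s') * exp (-(\<delta>^2*B/4))"
    unfolding kdef by simp
  also have "exp (-(\<delta>^2*B/4)) \<le> B powr (-1/2)"
  proof -
    have "\<delta>^2*B = CG * ln B" using dsq B0 by simp
    hence "-(\<delta>^2*B/4) \<le> -1/2 * ln B" using CG lnB by (simp add: field_simps)
    hence "exp (-(\<delta>^2*B/4)) \<le> exp (-1/2 * ln B)" by simp
    thus ?thesis using B0 by (simp add: powr_def)
  qed
  finally show ?thesis unfolding ss by simp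
qed

lemma main_bound:
  fixes b :: "nat \<Rightarrow> real" and t CG eps K :: real and n :: nat
  assumes b0: "\<And>k. b k \<ge> 0" and sm: "summable (\<lambda>k. b k * exp (real k * t))"
    and Hpos: "Hr b t > 0"
    and Bge: "Bf b t \<ge> exp 1"
    and dpi: "CG * ln (Bf b t) / Bf b t < pi\<^sup>2"
    and dsmall: "Bf b t powr (3/2-eps) * sqrt (CG * ln (Bf b t) / Bf b t) ^ 3 \<le> 1/2"
    and CG: "CG > 2"
    and c3: "\<forall>\<theta>::real. \<bar>\<theta>\<bar> \<le> deltaf b CG t \<longrightarrow>
          (\<exists>D::complex. Hc b (Complex t \<theta>) =
              complex_of_real (Hr b t) *
                exp (\<i> * complex_of_real (\<theta> * Af b t) - complex_of_real (\<theta>\<^sup>2 * Bf b t / 2) + D)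
            \<and> norm D \<le> Bf b t powr (3/2 - eps) * \<bar>\<theta>\<bar> ^ 3)"
    and c4: "\<forall>\<theta>::real. deltaf b CG t \<le> \<bar>\<theta>\<bar> \<and> \<bar>\<theta>\<bar> \<le> pi \<longrightarrow>
          norm (Hc b (Complex t \<theta>)) \<le> K * Hr b t / Bf b t"
  shows "\<bar>b n * exp (real n * t) * sqrt (2 * pi * Bf b t) / Hr b t
             - exp (- ((real n - Af b t)\<^sup>2 / (2 * Bf b t)))\<bar>
         \<le> 3/2 * integral\<^sup>L lborel (\<lambda>x. std_normal_density x * \<bar>x\<bar>^3) * Bf b t powr (-eps)
            + (\<bar>K\<bar> * sqrt (2*pi) + sqrt 2) * Bf b t powr (-1/2)"
proof -
  define H where "H = Hr b t"
  define A where "A = Af b t"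
  define B where "B = Bf b t"
  define \<delta> where "\<delta> = deltaf b CG t"
  define M3 where "M3 = integral\<^sup>L lborel (\<lambda>x. std_normal_density x * \<bar>x\<bar>^3)"
  define s where "s = sqrt B"
  define s' where "s' = sqrt (B/2)"
  define x where "x = real n - A"
  define c where "c = b n * exp (real n * t)"
  have H0: "H > 0" using Hpos by (simp add: H_def)
  have B1: "B \<ge> exp 1" using Bge by (simp add: B_def)
  have B0: "B > 0" using B1 by (smt (verit) exp_gt_zero)
  have lnB: "ln B \<ge> 1" using B1 B0 by (metis ln_exp ln_le_cancel_iff exp_gt_zero)
  have Bg1: "B \<ge> 1" using B1 exp_ge_add_one_self[of 1] by simp
  have s0: "s > 0" and s'0: "s' > 0" using B0 by (auto simp: s_def s'_def)
  have ss: "s^2 = B" using B0 by (simp add: s_def)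
  have dn: "0 \<le> CG * ln B / B" using CG lnB B0 Bg1 by (intro divide_nonneg_pos mult_nonneg_nonneg) auto
  have dsq: "\<delta>^2 = CG * ln B / B"
    using dn by (simp add: deltaf_def \<delta>_def B_def[symmetric])
  have d0: "\<delta> \<ge> 0" using dn by (simp add: \<delta>_def deltaf_def B_def[symmetric])
  have dlpi: "\<delta> < pi"
  proof -
    have "\<delta>^2 < pi^2" using dpi dsq by (simp add: B_def)
    thus ?thesis using d0 by (smt (verit) power_mono pi_gt_zero)
  qed
  have dsm: "B powr (3/2-eps) * \<delta>^3 \<le> 1/2"
    using dsmall by (simp add: \<delta>_def deltaf_def B_def)
  define P where "P = (\<lambda>\<theta>::real. indicator {-pi..pi} \<theta> *\<^sub>R (Hc b (Complex t \<theta>) * exp (- (\<i> * of_nat n * of_real \<theta>))))"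
  define g where "g = (\<lambda>\<theta>::real. exp (-(s*\<theta>)\<^sup>2/2) *\<^sub>R iexp ((-x) * \<theta>))"
  define h where "h = (\<lambda>\<theta>. P \<theta> / complex_of_real H - g \<theta>)"
  have Pi: "integrable lborel P" and PI: "integral\<^sup>L lborel P = complex_of_real (2*pi*c)"
    using fourier_coeff[OF b0 sm, of n] by (simp_all add: P_def c_def)
  have gi: "integrable lborel g" and gI: "integral\<^sup>L lborel g = complex_of_real (sqrt (2*pi) / s * exp (-((-x)/s)\<^sup>2/2))"
    using gauss_char[OF s0, of "-x"] by (simp_all add: g_def)
  have hi: "integrable lborel h" unfolding h_def using Pi gi by auto
  define R where "R = 2*pi*c/H - sqrt (2*pi) / s * exp (-((-x)/s)\<^sup>2/2)"
  have hI: "integral\<^sup>L lborel h = complex_of_real R"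
    unfolding h_def R_def using Pi gi PI gI by (simp add: integral_diff)
  define bnd where "bnd = (\<lambda>\<theta>::real. (3/2 * B powr (3/2-eps)) * (exp (-(s*\<theta>)\<^sup>2/2) * \<bar>\<theta>\<bar>^3)
      + (\<bar>K\<bar>/B) * indicator {-pi..pi} \<theta> + exp (-(\<delta>^2*B/4)) * (exp (-(s'*\<theta>)\<^sup>2/2) * \<bar>\<theta>\<bar>^0))"
  have bi: "integrable lborel bnd"
    unfolding bnd_def using gauss_moment(1)[OF s0, of 3] gauss_moment(1)[OF s'0, of 0]
    by (intro Bochner_Integration.integrable_add integrable_mult_right) auto
  have M0: "integral\<^sup>L lborel (\<lambda>x. std_normal_density x * \<bar>x\<bar>^0) = 1"
    using integral_std_normal_moment_even[of 0] by simp
  have bI: "integral\<^sup>L lborel bnd = (3/2 * B powr (3/2-eps)) * (sqrt (2*pi) * M3 / s^4)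
      + (\<bar>K\<bar>/B) * (2*pi) + exp (-(\<delta>^2*B/4)) * (sqrt (2*pi) / s')"
  proof -
    have i1: "integrable lborel (\<lambda>\<theta>. exp (-(s*\<theta>)\<^sup>2/2) * \<bar>\<theta>\<bar>^3)" by (rule gauss_moment(1)[OF s0])
    have i3: "integrable lborel (\<lambda>\<theta>. exp (-(s'*\<theta>)\<^sup>2/2) * \<bar>\<theta>\<bar>^0)" by (rule gauss_moment(1)[OF s'0])
    have i2: "integrable lborel (\<lambda>\<theta>::real. indicator {-pi..pi} \<theta> :: real)" by simp
    have I1: "integral\<^sup>L lborel (\<lambda>\<theta>. exp (-(s*\<theta>)\<^sup>2/2) * \<bar>\<theta>\<bar>^3) = sqrt (2*pi) * M3 / s^4"
      using gauss_moment(2)[OF s0, of 3] by (simp add: M3_def)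
    have I3: "integral\<^sup>L lborel (\<lambda>\<theta>. exp (-(s'*\<theta>)\<^sup>2/2) * \<bar>\<theta>\<bar>^0) = sqrt (2*pi) / s'"
      using gauss_moment(2)[OF s'0, of 0] M0 by simp
    have I2: "integral\<^sup>L lborel (\<lambda>\<theta>::real. indicator {-pi..pi} \<theta> :: real) = 2*pi" by simp
    show ?thesis unfolding bnd_def
      using i1 i2 i3 I1 I2 I3 by (simp add: integral_add)
  qed
  have pw: "norm (h \<theta>) \<le> bnd \<theta>" for \<theta>
  proof -
    have gn: "norm (g \<theta>) = exp (-(s*\<theta>)\<^sup>2/2)" by (simp add: g_def)
    have t1: "0 \<le> (3/2 * B powr (3/2-eps)) * (exp (-(s*\<theta>)\<^sup>2/2) * \<bar>\<theta>\<bar>^3)" by simp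
    have t2: "0 \<le> (\<bar>K\<bar>/B) * indicator {-pi..pi} \<theta>" using B0 by simp
    have t3: "0 \<le> exp (-(\<delta>^2*B/4)) * (exp (-(s'*\<theta>)\<^sup>2/2) * \<bar>\<theta>\<bar>^0)" by simp
    have en: "norm (exp (- (\<i> * of_nat n * of_real \<theta>))) = 1" by (simp add: norm_exp_eq_Re)
    have gtail: "exp (-(s*\<theta>)\<^sup>2/2) \<le> exp (-(\<delta>^2*B/4)) * (exp (-(s'*\<theta>)\<^sup>2/2) * \<bar>\<theta>\<bar>^0)"
      if "\<delta> \<le> \<bar>\<theta>\<bar>"
    proof -
      have "\<delta>^2 \<le> \<bar>\<theta>\<bar>^2" using that d0 by (intro power_mono) auto
      hence dt: "\<delta>^2 * B \<le> \<theta>^2 * B" using B0 by (intro mult_right_mono) auto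
      have q1: "(s*\<theta>)\<^sup>2 = B*\<theta>^2" and q2: "(s'*\<theta>)\<^sup>2 = B/2*\<theta>^2"
        using B0 by (simp_all add: s_def s'_def power_mult_distrib)
      have "-(B*\<theta>^2)/2 \<le> -(\<delta>^2*B/4) + -(B/2*\<theta>^2)/2" using dt by (simp add: algebra_simps)
      hence "exp (-(B*\<theta>^2)/2) \<le> exp (-(\<delta>^2*B/4) + -(B/2*\<theta>^2)/2)" by simp
      thus ?thesis unfolding q1 q2 exp_add by simp
    qed
    show ?thesis
    proof (cases "\<bar>\<theta>\<bar> \<le> \<delta>")
      case True
      hence thI: "\<theta> \<in> {-pi..pi}" using dlpi by auto
      obtain D where HD: "Hc b (Complex t \<theta>) = complex_of_real H *
                exp (\<i> * complex_of_real (\<theta> * A) - complex_of_real (\<theta>\<^sup>2 * B / 2) + D)"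
          and nD: "norm D \<le> B powr (3/2 - eps) * \<bar>\<theta>\<bar> ^ 3"
        using c3 True unfolding H_def A_def B_def \<delta>_def by blast
      have "B powr (3/2-eps) * \<bar>\<theta>\<bar>^3 \<le> B powr (3/2-eps) * \<delta>^3"
        using True by (intro mult_left_mono power_mono) auto
      hence nD2: "norm D \<le> 1/2" using dsm nD by linarith
      have hth: "h \<theta> = g \<theta> * (exp D - 1)"
        unfolding h_def P_def g_def x_def s_def using thI HD key_identity[OF _ B0[THEN less_imp_le], of H \<theta> A D n] H0 by simp
      have "norm (h \<theta>) = exp (-(s*\<theta>)\<^sup>2/2) * norm (exp D - 1)" using hth gn by (simp add: norm_mult)
      also have "\<dots> \<le> exp (-(s*\<theta>)\<^sup>2/2) * (3/2 * norm D)"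
        using norm_exp_bounds(2)[OF nD2] by (intro mult_left_mono) auto
      also have "\<dots> \<le> exp (-(s*\<theta>)\<^sup>2/2) * (3/2 * (B powr (3/2-eps) * \<bar>\<theta>\<bar>^3))"
        using nD by (intro mult_left_mono) auto
      also have "\<dots> = (3/2 * B powr (3/2-eps)) * (exp (-(s*\<theta>)\<^sup>2/2) * \<bar>\<theta>\<bar>^3)" by (simp add: algebra_simps)
      finally show ?thesis using t2 t3 unfolding bnd_def by linarith
    next
      case False
      have gt: "exp (-(s*\<theta>)\<^sup>2/2) \<le> exp (-(\<delta>^2*B/4)) * (exp (-(s'*\<theta>)\<^sup>2/2) * \<bar>\<theta>\<bar>^0)"
        using gtail False by simp
      show ?thesis
      proof (cases "\<theta> \<in> {-pi..pi}")
        case True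
        have "\<bar>\<theta>\<bar> \<le> pi" using True by auto
        hence "norm (Hc b (Complex t \<theta>)) \<le> K * H / B" using c4 False unfolding H_def B_def \<delta>_def by auto
        also have "\<dots> \<le> \<bar>K\<bar> * H / B" using H0 B0 by (intro divide_right_mono mult_right_mono) auto
        finally have nP: "norm (P \<theta>) \<le> \<bar>K\<bar> * H / B" using True en by (simp add: P_def norm_mult)
        have "norm (P \<theta> / complex_of_real H) = norm (P \<theta>) / H" using H0 by (simp add: norm_divide)
        also have "\<dots> \<le> (\<bar>K\<bar> * H / B) / H" using nP H0 by (intro divide_right_mono) auto
        also have "\<dots> = \<bar>K\<bar> / B" using H0 by simp
        finally have nPH: "norm (P \<theta> / complex_of_real H) \<le> \<bar>K\<bar> / B" .
        have "norm (h \<theta>) \<le> norm (P \<theta> / complex_of_real H) + norm (g \<theta>)"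
          unfolding h_def by (rule norm_triangle_ineq4)
        moreover have ind1: "indicator {-pi..pi} \<theta> = (1::real)" using True by simp
        ultimately show ?thesis using nPH gn gt t1 unfolding bnd_def ind1 mult_1_right by linarith
      next
        case False
        hence "h \<theta> = - g \<theta>" by (simp add: h_def P_def)
        hence "norm (h \<theta>) = exp (-(s*\<theta>)\<^sup>2/2)" using gn by simp
        thus ?thesis using gt t1 t2 unfolding bnd_def by linarith
      qed
    qed
  qed
  have Rb: "\<bar>R\<bar> \<le> integral\<^sup>L lborel bnd"
    using Bochner_Integration.integral_norm_bound_integral[OF hi bi pw] hI by simp
  define k where "k = s / sqrt (2*pi)"
  have k0: "k > 0" using s0 by (simp add: k_def)
  have sp: "sqrt (2*pi*B) = sqrt (2*pi) * s" by (simp add: s_def real_sqrt_mult)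
  have xs: "((-x)/s)\<^sup>2 = x\<^sup>2 / B" using ss by (simp add: power_divide)
  have "k * R = c * sqrt (2*pi*B) / H - exp (- (x\<^sup>2 / (2 * B)))"
  proof -
    have "k * R = (s / sqrt (2*pi)) * (2*pi) * c / H - (s / sqrt (2*pi)) * (sqrt (2*pi) / s) * exp (-(x\<^sup>2 / B)/2)"
      unfolding k_def R_def xs by (simp add: algebra_simps)
    also have "(s / sqrt (2*pi)) * (sqrt (2*pi) / s) = 1" using s0 by simp
    also have "(s / sqrt (2*pi)) * (2*pi) = sqrt (2*pi) * s"
      by (simp add: field_simps)
    finally show ?thesis unfolding sp by (simp add: field_simps)
  qed
  then have LHS: "\<bar>c * sqrt (2*pi*B) / H - exp (- (x\<^sup>2 / (2 * B)))\<bar> = k * \<bar>R\<bar>"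
  proof -
    assume a: "k * R = c * sqrt (2*pi*B) / H - exp (- (x\<^sup>2 / (2 * B)))"
    have "\<bar>k * R\<bar> = k * \<bar>R\<bar>" using k0 by (simp add: abs_mult)
    thus ?thesis unfolding a .
  qed
  have sB: "s = B powr (1/2)" using B0 by (simp add: s_def powr_half_sqrt)
  have e1: "k * ((3/2 * B powr (3/2-eps)) * (sqrt (2*pi) * M3 / s^4)) = 3/2 * M3 * B powr (-eps)"
    by (rule e1_aux[OF B0 s_def k_def])
  have e2: "k * ((\<bar>K\<bar>/B) * (2*pi)) = \<bar>K\<bar> * sqrt (2*pi) * B powr (-1/2)"
    by (rule e2_aux[OF B0 s_def k_def])
  have e3: "k * (exp (-(\<delta>^2*B/4)) * (sqrt (2*pi) / s')) \<le> sqrt 2 * B powr (-1/2)"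
    by (rule e3_aux[OF B0 s_def s'_def k_def dsq CG lnB])
  have "k * \<bar>R\<bar> \<le> k * integral\<^sup>L lborel bnd" using Rb k0 by simp
  also have "\<dots> \<le> 3/2 * M3 * B powr (-eps) + (\<bar>K\<bar> * sqrt (2*pi) + sqrt 2) * B powr (-1/2)"
    unfolding bI distrib_left distrib_right using e1 e2 e3 by linarith
  finally have "\<bar>c * sqrt (2*pi*B) / H - exp (- (x\<^sup>2 / (2 * B)))\<bar> \<le>
      3/2 * M3 * B powr (-eps) + (\<bar>K\<bar> * sqrt (2*pi) + sqrt 2) * B powr (-1/2)"
    unfolding LHS .
  thus ?thesis unfolding c_def H_def B_def x_def A_def M3_def by simp
qed

theorem lemma6p5:
  fixes a :: "nat \<Rightarrow> real"
  assumes "type_II_admissible (\<lambda>n. (a n)\<^sup>2)"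
  shows "\<exists>\<epsilon>::real. 0 < \<epsilon> \<and> \<epsilon> < 1 \<and> (\<exists>C>0. \<exists>t0. \<forall>t\<ge>t0. \<forall>n::nat.
           \<bar>(a n)\<^sup>2 * exp (real n * t) * sqrt (2 * pi * Bf (\<lambda>n. (a n)\<^sup>2) t) / Hr (\<lambda>n. (a n)\<^sup>2) t
             - exp (- ((real n - Af (\<lambda>n. (a n)\<^sup>2) t)\<^sup>2 / (2 * Bf (\<lambda>n. (a n)\<^sup>2) t)))\<bar>
           \<le> C / Bf (\<lambda>n. (a n)\<^sup>2) t powr \<epsilon>)"
proof -
  define b where "b = (\<lambda>n. (a n)\<^sup>2)"
  have adm: "type_II_admissible b" using assms unfolding b_def .
  note cj = adm[unfolded type_II_admissible_def]
  have b0: "b k \<ge> 0" for k using conjunct1[OF cj] by simp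
  have summ: "\<forall>z::complex. summable (\<lambda>n. b n * norm z ^ n)" using conjunct1[OF conjunct2[OF cj]] .
  have infb: "infinite {n. b n \<noteq> 0}" using conjunct1[OF conjunct2[OF conjunct2[OF cj]]] .
  have monoB: "mono (Bf b)" using conjunct1[OF conjunct2[OF conjunct2[OF conjunct2[OF cj]]]] .
  have unb: "\<not> bdd_above (range (Bf b))" using conjunct1[OF conjunct2[OF conjunct2[OF conjunct2[OF conjunct2[OF cj]]]]] .
  note cj6 = conjunct2[OF conjunct2[OF conjunct2[OF conjunct2[OF conjunct2[OF conjunct2[OF cj]]]]]]
  obtain CG eps K where CG: "CG > 2" and eps: "eps > 0"
    and ev3: "\<forall>\<^sub>F t in at_top. \<forall>\<theta>::real. \<bar>\<theta>\<bar> \<le> deltaf b CG t \<longrightarrow>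
          (\<exists>D::complex. Hc b (Complex t \<theta>) =
              complex_of_real (Hr b t) *
                exp (\<i> * complex_of_real (\<theta> * Af b t) - complex_of_real (\<theta>\<^sup>2 * Bf b t / 2) + D)
            \<and> norm D \<le> Bf b t powr (3/2 - eps) * \<bar>\<theta>\<bar> ^ 3)"
    and ev4: "\<forall>\<^sub>F t in at_top. \<forall>\<theta>::real. deltaf b CG t \<le> \<bar>\<theta>\<bar> \<and> \<bar>\<theta>\<bar> \<le> pi \<longrightarrow>
          norm (Hc b (Complex t \<theta>)) \<le> K * Hr b t / Bf b t"
    using cj6 by (elim exE conjE) (rule that; assumption)
  have sm: "summable (\<lambda>k. b k * exp (real k * t))" for t
    using summ[rule_format, of "complex_of_real (exp t)"] by (simp add: exp_of_nat_mult)
  obtain k0 where k0: "b k0 \<noteq> 0" using infb by (metis (mono_tags, lifting) empty_Collect_eq finite.emptyI)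
  have Hpos: "Hr b t > 0" for t
    unfolding Hr_def
  proof (rule suminf_pos2[OF sm, where i = k0])
    show "0 \<le> b n * exp (real n * t)" for n using b0[of n] by simp
    show "0 < b k0 * exp (real k0 * t)" using b0[of k0] k0 by simp
  qed
  have Blim: "filterlim (Bf b) at_top at_top"
    unfolding filterlim_at_top
  proof
    fix Z :: real
    obtain t1 where t1: "Bf b t1 > Z" using unb unfolding bdd_above_def by (auto simp: not_le)
    show "eventually (\<lambda>t. Z \<le> Bf b t) at_top"
      unfolding eventually_at_top_linorder
      using t1 monoB by (metis less_imp_le monoD order_trans)
  qed
  have evy: "eventually (\<lambda>y. exp 1 \<le> y \<and> CG * ln y / y < pi\<^sup>2 \<and>
      y powr (3/2-eps) * sqrt (CG * ln y / y) ^ 3 \<le> 1/2) at_top"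
    using CG eps by (intro eventually_conj) real_asymp+
  have evB: "eventually (\<lambda>t. exp 1 \<le> Bf b t \<and> CG * ln (Bf b t) / Bf b t < pi\<^sup>2 \<and>
      Bf b t powr (3/2-eps) * sqrt (CG * ln (Bf b t) / Bf b t) ^ 3 \<le> 1/2) at_top"
    by (rule eventually_compose_filterlim[OF evy Blim])
  obtain t0 where t0: "\<And>t. t \<ge> t0 \<Longrightarrow> (exp 1 \<le> Bf b t \<and> CG * ln (Bf b t) / Bf b t < pi\<^sup>2 \<and>
      Bf b t powr (3/2-eps) * sqrt (CG * ln (Bf b t) / Bf b t) ^ 3 \<le> 1/2) \<and>
      (\<forall>\<theta>::real. \<bar>\<theta>\<bar> \<le> deltaf b CG t \<longrightarrow>
          (\<exists>D::complex. Hc b (Complex t \<theta>) =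
              complex_of_real (Hr b t) *
                exp (\<i> * complex_of_real (\<theta> * Af b t) - complex_of_real (\<theta>\<^sup>2 * Bf b t / 2) + D)
            \<and> norm D \<le> Bf b t powr (3/2 - eps) * \<bar>\<theta>\<bar> ^ 3)) \<and>
      (\<forall>\<theta>::real. deltaf b CG t \<le> \<bar>\<theta>\<bar> \<and> \<bar>\<theta>\<bar> \<le> pi \<longrightarrow>
          norm (Hc b (Complex t \<theta>)) \<le> K * Hr b t / Bf b t)"
    using eventually_conj[OF evB eventually_conj[OF ev3 ev4]] unfolding eventually_at_top_linorder by blast
  define M3 where "M3 = integral\<^sup>L lborel (\<lambda>x. std_normal_density x * \<bar>x\<bar>^3)"
  have M30: "M3 \<ge> 0" unfolding M3_def by (intro integral_nonneg_AE AE_I2) (auto simp: normal_density_nonneg)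
  define e' where "e' = min eps (1/2)"
  define C where "C = 3/2 * M3 + (\<bar>K\<bar> * sqrt (2*pi) + sqrt 2) + 1"
  have C0: "C > 0"
  proof -
    have "0 \<le> \<bar>K\<bar> * sqrt (2*pi)" by simp
    moreover have "0 \<le> sqrt (2::real)" by simp
    ultimately show ?thesis unfolding C_def using M30 by linarith
  qed
  have main: "\<exists>\<epsilon>::real. 0 < \<epsilon> \<and> \<epsilon> < 1 \<and> (\<exists>C>0. \<exists>t0. \<forall>t\<ge>t0. \<forall>n::nat.
           \<bar>b n * exp (real n * t) * sqrt (2 * pi * Bf b t) / Hr b t
             - exp (- ((real n - Af b t)\<^sup>2 / (2 * Bf b t)))\<bar>
           \<le> C / Bf b t powr \<epsilon>)"
  proof (rule exI[of _ e'], intro conjI)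
    show "0 < e'" "e' < 1" using eps by (auto simp: e'_def)
    show "\<exists>C>0. \<exists>t0. \<forall>t\<ge>t0. \<forall>n::nat.
           \<bar>b n * exp (real n * t) * sqrt (2 * pi * Bf b t) / Hr b t
             - exp (- ((real n - Af b t)\<^sup>2 / (2 * Bf b t)))\<bar>
           \<le> C / Bf b t powr e'"
    proof (rule exI[of _ C], intro conjI C0 exI[of _ t0] allI impI)
    fix t :: real and n :: nat
    assume tt: "t0 \<le> t"
    note tf = t0[OF tt]
    have B1: "Bf b t \<ge> 1" using tf exp_ge_add_one_self[of 1] by linarith
    have mb: "\<bar>b n * exp (real n * t) * sqrt (2 * pi * Bf b t) / Hr b t
             - exp (- ((real n - Af b t)\<^sup>2 / (2 * Bf b t)))\<bar>
         \<le> 3/2 * M3 * Bf b t powr (-eps) + (\<bar>K\<bar> * sqrt (2*pi) + sqrt 2) * Bf b t powr (-1/2)"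
      unfolding M3_def
      by (rule main_bound[OF b0 sm Hpos tf[THEN conjunct1, THEN conjunct1]
            tf[THEN conjunct1, THEN conjunct2, THEN conjunct1]
            tf[THEN conjunct1, THEN conjunct2, THEN conjunct2] CG
            tf[THEN conjunct2, THEN conjunct1] tf[THEN conjunct2, THEN conjunct2]])
    have p1: "Bf b t powr (-eps) \<le> Bf b t powr (-e')" using B1 by (intro powr_mono) (auto simp: e'_def)
    have p2: "Bf b t powr (-1/2) \<le> Bf b t powr (-e')" using B1 by (intro powr_mono) (auto simp: e'_def)
    have "3/2 * M3 * Bf b t powr (-eps) + (\<bar>K\<bar> * sqrt (2*pi) + sqrt 2) * Bf b t powr (-1/2)
        \<le> 3/2 * M3 * Bf b t powr (-e') + (\<bar>K\<bar> * sqrt (2*pi) + sqrt 2) * Bf b t powr (-e')"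
      using M30 p1 p2 by (intro add_mono mult_left_mono) auto
    also have "\<dots> \<le> C * Bf b t powr (-e')" unfolding C_def by (simp add: algebra_simps)
    also have "\<dots> = C / Bf b t powr e'" by (simp add: powr_minus_divide)
    finally show "\<bar>b n * exp (real n * t) * sqrt (2 * pi * Bf b t) / Hr b t
             - exp (- ((real n - Af b t)\<^sup>2 / (2 * Bf b t)))\<bar> \<le> C / Bf b t powr e'"
      using mb by linarith
  qed
  qed
  from main show ?thesis unfolding b_def by simp
qed

end
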